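(* Suppose the digraph $\mathcal{G}=(\mathcal{V},\mathcal{E})$ is strongly connected. Then each of the four matrices $$\sum_{(j,i)\in\mathcal{E}}p_{ij}(I-L_{ji})\otimes(I-L_{ji}),\quad \sum_{(j,i)\in\mathcal{E}}p_{ij}(I-L_{ji})\otimes S_{ji},\quad \sum_{(j,i)\in\mathcal{E}}p_{ij}S_{ji}\otimes(I-L_{ji}),\quad \sum_{(j,i)\in\mathcal{E}}p_{ij}S_{ji}\otimes S_{ji}$$ has $1$ as a simple eigenvalue, and all of its other eigenvalues have modulus strictly smaller than one.
   Context: Setting: $\mathcal{V}=\{1,\dots,n\}$, $n>1$, and $\mathcal{G}$ has no selfloops. To each edge $(j,i)\in\mathcal{E}$ are assigned $p_{ij}\in(0,1)$, with $\sum_{(j,i)\in\mathcal{E}}p_{ij}=1$, and $w_{ij}\in(0,1)$. Notation: $f_i$ is the $i$-th standard basis vector of $\mathbb{R}^n$ and $\otimes$ is the Kronecker product. For each edge $(j,i)$, $L_{ji}=w_{ij}f_if_i^T-w_{ij}f_if_j^T$ and $S_{ji}=I-(f_j-f_i)f_j^T$. *)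

theory Defs
  imports "Jordan_Normal_Form.Jordan_Normal_Form"
begin

text \<open>Vertices are 0..n-1 (paper: 1..n). Standard basis vector f_i as an n x 1 column matrix.\<close>
definition fcol :: "nat \<Rightarrow> nat \<Rightarrow> real mat" where
  "fcol n i = mat n 1 (\<lambda>(a,b). if a = i then 1 else 0)"

definition Lmat :: "nat \<Rightarrow> (nat \<Rightarrow> nat \<Rightarrow> real) \<Rightarrow> nat \<Rightarrow> nat \<Rightarrow> real mat" where
  "Lmat n w j i = w i j \<cdot>\<^sub>m (fcol n i * transpose_mat (fcol n i))
                 - w i j \<cdot>\<^sub>m (fcol n i * transpose_mat (fcol n j))"

definition Smat :: "nat \<Rightarrow> nat \<Rightarrow> nat \<Rightarrow> real mat" where
  "Smat n j i = 1\<^sub>m n - (fcol n j - fcol n i) * transpose_mat (fcol n j)"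

definition kron :: "'a::times mat \<Rightarrow> 'a mat \<Rightarrow> 'a mat" where
  "kron A B = mat (dim_row A * dim_row B) (dim_col A * dim_col B)
     (\<lambda>(a,b). A $$ (a div dim_row B, b div dim_col B) * B $$ (a mod dim_row B, b mod dim_col B))"

definition msum :: "nat \<Rightarrow> ('b \<Rightarrow> 'a::comm_monoid_add mat) \<Rightarrow> 'b set \<Rightarrow> 'a mat" where
  "msum m F S = mat m m (\<lambda>ij. \<Sum>x\<in>S. F x $$ ij)"

definition simple_one_rest_inside :: "real mat \<Rightarrow> bool" where
  "simple_one_rest_inside M \<longleftrightarrow>
     (let Mc = map_mat complex_of_real M in
       eigenvalue Mc 1 \<and> order 1 (char_poly Mc) = 1 \<and>
       (\<forall>z. eigenvalue Mc z \<and> z \<noteq> 1 \<longrightarrow> cmod z < 1))"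

end

theory Submission
  imports Defs "Jordan_Normal_Form.Jordan_Normal_Form_Uniqueness" "Jordan_Normal_Form.Jordan_Normal_Form_Existence"
begin


lemma exists_max_idx:
  fixes f :: "nat \<Rightarrow> real"
  assumes "N > 0"
  shows "\<exists>k<N. \<forall>b<N. f b \<le> f k"
proof -
  let ?S = "f ` {..<N}"
  have fin: "finite ?S" and ne: "?S \<noteq> {}" using assms by auto
  obtain k where k: "k < N" "f k = Max ?S" using Max_in[OF fin ne] by auto
  show ?thesis using k Max_ge[OF fin] by auto
qed

lemma gen_core:
  fixes Pf :: "nat \<Rightarrow> nat \<Rightarrow> real" and h :: "nat \<Rightarrow> real" and x :: "nat \<Rightarrow> complex"
  assumes N: "N > 0"
    and nn: "\<And>k b. k < N \<Longrightarrow> b < N \<Longrightarrow> Pf k b \<ge> 0"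
    and hp: "\<And>k. k < N \<Longrightarrow> h k > 0"
    and Ph: "\<And>k. k < N \<Longrightarrow> (\<Sum>b<N. Pf k b * h b) = h k"
    and eq: "\<And>k. k < N \<Longrightarrow> (\<Sum>b<N. of_real (Pf k b) * x b) = x k + c * of_real (h k)"
  shows "c = 0"
proof -
  define a where "a k = Re (cnj c * x k)" for k
  have aeq: "(\<Sum>b<N. Pf k b * a b) = a k + (cmod c)^2 * h k" if k: "k < N" for k
  proof -
    have "(\<Sum>b<N. Pf k b * a b) = Re (cnj c * (\<Sum>b<N. of_real (Pf k b) * x b))"
      unfolding a_def by (simp add: sum_distrib_left Re_sum algebra_simps)
    also have "\<dots> = Re (cnj c * x k) + Re (cnj c * c) * h k"
      using eq[OF k] by (simp add: distrib_left mult.assoc algebra_simps)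
    also have "Re (cnj c * c) = (cmod c)^2" by (simp add: cmod_power2 power2_eq_square flip: power2_eq_square)
    finally show ?thesis unfolding a_def by simp
  qed
  obtain k where k: "k < N" and mx: "\<And>b. b < N \<Longrightarrow> a b / h b \<le> a k / h k"
    using exists_max_idx[OF N, of "\<lambda>b. a b / h b"] by auto
  define \<mu> where "\<mu> = a k / h k"
  have le: "a b \<le> \<mu> * h b" if "b < N" for b
    using mx[OF that] hp[OF that] unfolding \<mu>_def by (simp add: divide_le_eq mult.commute)
  have "(\<Sum>b<N. Pf k b * a b) \<le> (\<Sum>b<N. Pf k b * (\<mu> * h b))"
    by (rule sum_mono) (use le nn k in \<open>auto intro: mult_left_mono\<close>)
  also have "\<dots> = \<mu> * (\<Sum>b<N. Pf k b * h b)" by (simp add: sum_distrib_left mult.left_commute)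
  also have "\<dots> = \<mu> * h k" using Ph[OF k] by simp
  also have "\<dots> = a k" unfolding \<mu>_def using hp[OF k] by simp
  finally have "(cmod c)^2 * h k \<le> 0" using aeq[OF k] by simp
  hence "(cmod c)^2 \<le> 0" using hp[OF k] by (simp add: mult_le_0_iff)
  thus "c = 0" by simp
qed

lemma unit_disc_touch:
  fixes z :: complex and c :: real
  assumes "cmod z = 1" "c > 0" "cmod (z - of_real c) \<le> 1 - c"
  shows "z = 1"
proof -
  have c1: "1 - c \<ge> 0" using assms(3) norm_ge_zero[of "z - of_real c"] by linarith
  have "(cmod (z - of_real c))^2 \<le> (1 - c)^2"
    using assms(3) by (intro power_mono) auto
  hence A: "(Re z - c)^2 + (Im z)^2 \<le> (1 - c)^2" by (simp add: cmod_power2)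
  have B: "(Re z)^2 + (Im z)^2 = 1" using assms(1) by (simp add: cmod_power2 flip: cmod_power2)
  from A B have "Re z \<ge> 1" using assms(2) by (simp add: power2_eq_square algebra_simps)
  moreover have "(Re z)^2 \<le> 1" using B by (smt (verit) zero_le_power2)
  ultimately have "Re z = 1"
    by (smt (verit) power2_eq_square mult_le_cancel_left1)
  with B have "Im z = 0" by simp
  with \<open>Re z = 1\<close> show ?thesis by (simp add: complex_eq_iff)
qed

lemma modulus_core:
  fixes Pf :: "nat \<Rightarrow> nat \<Rightarrow> real" and h :: "nat \<Rightarrow> real" and x :: "nat \<Rightarrow> complex"
  assumes nn: "\<And>k b. k < N \<Longrightarrow> b < N \<Longrightarrow> Pf k b \<ge> 0"
    and hp: "\<And>k. k < N \<Longrightarrow> h k > 0"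
    and Ph: "\<And>k. k < N \<Longrightarrow> (\<Sum>b<N. Pf k b * h b) = h k"
    and r: "r < N" and Prr: "Pf r r > 0"
    and reach: "\<And>k. k < N \<Longrightarrow> (k, r) \<in> {(k,b). k < N \<and> b < N \<and> Pf k b > 0}\<^sup>*"
    and eq: "\<And>k. k < N \<Longrightarrow> z * x k = (\<Sum>b<N. of_real (Pf k b) * x b)"
    and nz: "\<exists>k<N. x k \<noteq> 0"
    and z1: "cmod z \<ge> 1"
  shows "z = 1 \<and> (\<forall>k<N. cmod (x k) / h k \<le> cmod (x r) / h r)"
proof -
  have N: "N > 0" using r by auto
  define f where "f k = cmod (x k) / h k" for k
  obtain k0 where k0: "k0 < N" and mx: "\<And>b. b < N \<Longrightarrow> f b \<le> f k0"
    using exists_max_idx[OF N, of f] by auto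
  define m where "m = f k0"
  obtain k1 where k1: "k1 < N" "x k1 \<noteq> 0" using nz by auto
  have "f k1 > 0" unfolding f_def using k1 hp[OF k1(1)] by simp
  hence mpos: "m > 0" using mx[OF k1(1)] unfolding m_def by simp
  have le: "cmod (x b) \<le> m * h b" if "b < N" for b
    using mx[OF that] hp[OF that] unfolding m_def f_def by (simp add: divide_le_eq mult.commute)
  have bound: "cmod z * cmod (x k) \<le> (\<Sum>b<N. Pf k b * cmod (x b))" if k: "k < N" for k
  proof -
    have "cmod z * cmod (x k) = cmod (\<Sum>b<N. of_real (Pf k b) * x b)"
      using eq[OF k] by (metis norm_mult)
    also have "\<dots> \<le> (\<Sum>b<N. cmod (of_real (Pf k b) * x b))" by (rule norm_sum)
    also have "\<dots> = (\<Sum>b<N. Pf k b * cmod (x b))"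
      by (rule sum.cong) (use nn k in \<open>auto simp: norm_mult\<close>)
    finally show ?thesis .
  qed
  have bound2: "(\<Sum>b<N. Pf k b * cmod (x b)) \<le> m * h k" if k: "k < N" for k
  proof -
    have "(\<Sum>b<N. Pf k b * cmod (x b)) \<le> (\<Sum>b<N. Pf k b * (m * h b))"
      by (rule sum_mono) (use le nn k in \<open>auto intro: mult_left_mono\<close>)
    also have "\<dots> = m * (\<Sum>b<N. Pf k b * h b)" by (simp add: sum_distrib_left mult.left_commute)
    also have "\<dots> = m * h k" using Ph[OF k] by simp
    finally show ?thesis .
  qed
  have xk0: "cmod (x k0) = m * h k0" unfolding m_def f_def using hp[OF k0] by simp
  have "cmod z * (m * h k0) \<le> 1 * (m * h k0)"
    using bound[OF k0] bound2[OF k0] xk0 by simp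
  hence "cmod z \<le> 1" using mpos hp[OF k0] by (simp add: mult_le_cancel_right)
  with z1 have zz: "cmod z = 1" by simp
  define K where "K = {k. k < N \<and> cmod (x k) = m * h k}"
  have closed: "b \<in> K" if k: "k \<in> K" and b: "b < N" and pos: "Pf k b > 0" for k b
  proof -
    have kN: "k < N" using k K_def by auto
    have "m * h k \<le> (\<Sum>b<N. Pf k b * cmod (x b))"
      using bound[OF kN] zz k unfolding K_def by simp
    moreover have "(\<Sum>b<N. Pf k b * (m * h b)) = m * (\<Sum>b<N. Pf k b * h b)"
      by (simp add: sum_distrib_left mult.left_commute)
    moreover have "m * (\<Sum>b<N. Pf k b * h b) = m * h k" using Ph[OF kN] by simp
    ultimately have "(\<Sum>b<N. Pf k b * (m * h b - cmod (x b))) \<le> 0"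
      by (simp add: right_diff_distrib sum_subtractf)
    moreover have nonneg: "\<forall>b\<in>{..<N}. Pf k b * (m * h b - cmod (x b)) \<ge> 0"
      using nn kN le by auto
    ultimately have "(\<Sum>b<N. Pf k b * (m * h b - cmod (x b))) = 0"
      by (meson order_antisym sum_nonneg)
    hence "\<forall>b\<in>{..<N}. Pf k b * (m * h b - cmod (x b)) = 0"
      using sum_nonneg_eq_0_iff[of "{..<N}" "\<lambda>b. Pf k b * (m * h b - cmod (x b))"] nonneg by simp
    hence "Pf k b * (m * h b - cmod (x b)) = 0" using b by auto
    hence "cmod (x b) = m * h b" using pos by simp
    thus ?thesis using b K_def by auto
  qed
  have k0K: "k0 \<in> K" using k0 xk0 K_def by auto
  have "(k0, r) \<in> {(k,b). k < N \<and> b < N \<and> Pf k b > 0}\<^sup>*" using reach[OF k0] .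
  hence rK: "r \<in> K"
  proof (induction rule: rtrancl_induct)
    case base
    then show ?case using k0K .
  next
    case (step y w)
    then show ?case using closed by auto
  qed
  hence xr: "cmod (x r) = m * h r" using K_def by auto
  define c where "c = Pf r r"
  have split: "(\<Sum>b<N. of_real (Pf r b) * x b) = of_real c * x r + (\<Sum>b\<in>{..<N}-{r}. of_real (Pf r b) * x b)"
    unfolding c_def using r by (simp add: sum.remove)
  have "(z - of_real c) * x r = (\<Sum>b\<in>{..<N}-{r}. of_real (Pf r b) * x b)"
    using eq[OF r] split by (simp add: algebra_simps)
  hence "cmod (z - of_real c) * cmod (x r) \<le> (\<Sum>b\<in>{..<N}-{r}. cmod (of_real (Pf r b) * x b))"
    by (metis norm_mult norm_sum)
  also have "\<dots> = (\<Sum>b\<in>{..<N}-{r}. Pf r b * cmod (x b))"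
    by (rule sum.cong) (use nn r in \<open>auto simp: norm_mult\<close>)
  also have "\<dots> \<le> (\<Sum>b\<in>{..<N}-{r}. Pf r b * (m * h b))"
    by (rule sum_mono) (use le nn r in \<open>auto intro: mult_left_mono\<close>)
  also have "\<dots> = (\<Sum>b<N. Pf r b * (m * h b)) - c * (m * h r)"
    unfolding c_def using r by (simp add: sum_diff1)
  also have "(\<Sum>b<N. Pf r b * (m * h b)) = m * h r"
    using Ph[OF r] by (simp add: sum_distrib_left[symmetric] mult.left_commute)
  finally have "cmod (z - of_real c) * (m * h r) \<le> (1 - c) * (m * h r)"
    using xr by (simp add: algebra_simps)
  hence "cmod (z - of_real c) \<le> 1 - c" using mpos hp[OF r] by (simp add: mult_le_cancel_right)
  hence "z = 1" using unit_disc_touch[OF zz] Prr c_def by auto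
  moreover have "\<forall>k<N. cmod (x k) / h k \<le> cmod (x r) / h r"
    using mx xr hp[OF r] unfolding f_def m_def by simp
  ultimately show ?thesis by blast
qed


lemma kernel_dim_le1:
  fixes C :: "'a :: field mat"
  assumes C: "C \<in> carrier_mat n n" and v: "v \<in> carrier_vec n" and Cv: "C *\<^sub>v v = 0\<^sub>v n"
   and all: "\<And>x. x \<in> carrier_vec n \<Longrightarrow> C *\<^sub>v x = 0\<^sub>v n \<Longrightarrow> (\<exists>d. x = d \<cdot>\<^sub>v v)"
  shows "kernel_dim C \<le> 1"
proof -
  interpret K: kernel n n C by (unfold_locales, rule C)
  have vK: "v \<in> mat_kernel C" using mat_kernelI[OF C v Cv] .
  have sub: "{v} \<subseteq> mat_kernel C" using vK by auto
  have "K.Ker.span {v} = mat_kernel C"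
  proof
    show "K.Ker.span {v} \<subseteq> mat_kernel C" using K.Ker.span_is_subset2[OF sub] .
    show "mat_kernel C \<subseteq> K.Ker.span {v}"
    proof
      fix x assume x: "x \<in> mat_kernel C"
      from mat_kernelD[OF C x] all obtain d where d: "x = d \<cdot>\<^sub>v v" by blast
      have sm: "submodule class_ring (K.Ker.span {v}) K.VK" by (rule K.Ker.span_is_submodule[OF sub])
      have "v \<in> K.Ker.span {v}" using K.Ker.in_own_span[OF sub] by auto
      hence "d \<cdot>\<^sub>v v \<in> K.Ker.span {v}" using sm unfolding submodule_def by auto
      thus "x \<in> K.Ker.span {v}" using d by simp
    qed
  qed
  hence "card {v} \<ge> K.dim" by (intro K.Ker.gen_ge_dim) (use sub in auto)
  thus ?thesis by simp
qed

lemma mv_index: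
  assumes P: "P \<in> carrier_mat N N" and x: "x \<in> carrier_vec N" and k: "k < N"
  shows "(map_mat complex_of_real P *\<^sub>v x) $ k = (\<Sum>b<N. complex_of_real (P $$ (k,b)) * x $ b)"
  using P x k by (auto simp: scalar_prod_def lessThan_atLeast0 intro!: sum.cong)

lemma char_mat_mv:
  fixes A :: "'a::field mat"
  assumes A: "A \<in> carrier_mat n n" and v: "v \<in> carrier_vec n" and k: "k < n"
  shows "(char_matrix A e *\<^sub>v v) $ k = (A *\<^sub>v v) $ k - e * v $ k"
proof -
  have "char_matrix A e *\<^sub>v v = A *\<^sub>v v + ((-e) \<cdot>\<^sub>m 1\<^sub>m n) *\<^sub>v v"
    unfolding char_matrix_def using A v by (simp add: add_mult_distrib_mat_vec[of _ n n])
  thus ?thesis using A v k by simp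
qed

lemma sum_list_min2:
  assumes "\<forall>n\<in>set L. (n::nat) > 0" "sum_list (map (min 2) L) \<le> 1"
  shows "sum_list L \<le> 1"
  using assms
proof (induction L)
  case Nil then show ?case by simp
next
  case (Cons a L)
  then show ?case by (cases L) (auto simp: min_def split: if_splits)
qed


lemma abstract_simple:
  fixes P :: "real mat" and h :: "nat \<Rightarrow> real"
  assumes P: "P \<in> carrier_mat N N"
    and nn: "\<And>k b. k < N \<Longrightarrow> b < N \<Longrightarrow> P $$ (k,b) \<ge> 0"
    and hp: "\<And>k. k < N \<Longrightarrow> h k > 0"
    and Ph: "\<And>k. k < N \<Longrightarrow> (\<Sum>b<N. P $$ (k,b) * h b) = h k"
    and r: "r < N" and Prr: "P $$ (r,r) > 0"
    and reach: "\<And>k. k < N \<Longrightarrow> (k, r) \<in> {(k,b). k < N \<and> b < N \<and> P $$ (k,b) > 0}\<^sup>*"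
  shows "simple_one_rest_inside P"
proof -
  define Mc where "Mc = map_mat complex_of_real P"
  have Mc: "Mc \<in> carrier_mat N N" using P Mc_def by auto
  have N: "N > 0" using r by auto
  define hc where "hc = vec N (\<lambda>k. complex_of_real (h k))"
  have hc: "hc \<in> carrier_vec N" unfolding hc_def by auto
  have hc0: "hc \<noteq> 0\<^sub>v N"
  proof
    assume "hc = 0\<^sub>v N"
    hence "hc $ r = 0" using r by simp
    thus False using hp[OF r] r unfolding hc_def by simp
  qed
  have mv: "(Mc *\<^sub>v x) $ k = (\<Sum>b<N. complex_of_real (P $$ (k,b)) * x $ b)"
    if "x \<in> carrier_vec N" "k < N" for x k
    unfolding Mc_def by (rule mv_index[OF P that])
  have Mhc: "Mc *\<^sub>v hc = hc"
  proof (rule eq_vecI)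
    fix k assume "k < dim_vec hc"
    hence k: "k < N" using hc by auto
    have "(Mc *\<^sub>v hc) $ k = (\<Sum>b<N. complex_of_real (P $$ (k,b) * h b))"
      using mv[OF hc k] unfolding hc_def by simp
    also have "\<dots> = complex_of_real (\<Sum>b<N. P $$ (k,b) * h b)" by (rule of_real_sum[symmetric])
    also have "\<dots> = complex_of_real (h k)" using Ph[OF k] by simp
    finally show "(Mc *\<^sub>v hc) $ k = hc $ k" using k unfolding hc_def by simp
  qed (use Mc hc in auto)
  have ev1: "eigenvalue Mc 1"
    unfolding eigenvalue_def eigenvector_def using Mc hc hc0 Mhc by auto
  have fixp: "\<exists>d. y = d \<cdot>\<^sub>v hc" if y: "y \<in> carrier_vec N" and My: "Mc *\<^sub>v y = y" for y
  proof -
    define d where "d = y $ r / complex_of_real (h r)"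
    define w where "w k = y $ k - d * complex_of_real (h k)" for k
    have weq: "1 * w k = (\<Sum>b<N. complex_of_real (P $$ (k,b)) * w b)" if k: "k < N" for k
    proof -
      have "(\<Sum>b<N. complex_of_real (P $$ (k,b)) * w b)
          = (\<Sum>b<N. complex_of_real (P $$ (k,b)) * y $ b) - d * (\<Sum>b<N. complex_of_real (P $$ (k,b) * h b))"
        unfolding w_def by (simp add: algebra_simps sum_subtractf sum_distrib_left)
      also have "(\<Sum>b<N. complex_of_real (P $$ (k,b)) * y $ b) = y $ k"
        using mv[OF y k] My by simp
      also have "(\<Sum>b<N. complex_of_real (P $$ (k,b) * h b)) = complex_of_real (h k)"
      proof -
        have "(\<Sum>b<N. complex_of_real (P $$ (k,b) * h b)) = complex_of_real (\<Sum>b<N. P $$ (k,b) * h b)"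
          by (rule of_real_sum[symmetric])
        thus ?thesis using Ph[OF k] by simp
      qed
      finally show ?thesis unfolding w_def by simp
    qed
    have wr: "w r = 0" unfolding w_def d_def using hp[OF r] by simp
    have w0: "w k = 0" if k: "k < N" for k
    proof (rule ccontr)
      assume "w k \<noteq> 0"
      hence "\<exists>k<N. w k \<noteq> 0" using k by auto
      from modulus_core[of N "\<lambda>k b. P $$ (k,b)" h r 1 w, OF nn hp Ph r Prr reach weq this]
      have "cmod (w k) / h k \<le> cmod (w r) / h r" using k by auto
      hence "cmod (w k) \<le> 0" using wr hp[OF k] by (simp add: divide_le_0_iff)
      thus False using \<open>w k \<noteq> 0\<close> by simp
    qed
    have "y = d \<cdot>\<^sub>v hc"
      by (rule eq_vecI) (use y hc w0 in \<open>auto simp: w_def hc_def\<close>)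
    thus ?thesis by blast
  qed
  have inside: "cmod z < 1" if ez: "eigenvalue Mc z" and z1: "z \<noteq> 1" for z
  proof (rule ccontr)
    assume "\<not> cmod z < 1"
    hence zz: "cmod z \<ge> 1" by simp
    from ez obtain v where v: "v \<in> carrier_vec N" "v \<noteq> 0\<^sub>v N" "Mc *\<^sub>v v = z \<cdot>\<^sub>v v"
      unfolding eigenvalue_def eigenvector_def using Mc by auto
    have veq: "z * v $ k = (\<Sum>b<N. complex_of_real (P $$ (k,b)) * v $ b)" if k: "k < N" for k
      using mv[OF v(1) k] v(3) k v(1) by (metis index_smult_vec(1) carrier_vecD)
    have "\<exists>k<N. v $ k \<noteq> 0"
    proof (rule ccontr)
      assume "\<not> (\<exists>k<N. v $ k \<noteq> 0)"
      hence "v = 0\<^sub>v N" by (intro eq_vecI) (use v(1) in auto)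
      thus False using v(2) by simp
    qed
    from modulus_core[of N "\<lambda>k b. P $$ (k,b)" h r z "\<lambda>k. v $ k", OF nn hp Ph r Prr reach veq this zz]
    show False using z1 by simp
  qed
  define C where "C = char_matrix Mc 1"
  have Cc: "C \<in> carrier_mat N N" unfolding C_def using Mc by simp
  have Cmv: "(C *\<^sub>v x) $ k = (Mc *\<^sub>v x) $ k - x $ k" if "x \<in> carrier_vec N" "k < N" for x k
    unfolding C_def using char_mat_mv[OF Mc that, of 1] by simp
  have C2: "C ^\<^sub>m 2 *\<^sub>v x = C *\<^sub>v (C *\<^sub>v x)" if "x \<in> carrier_vec N" for x
  proof -
    have "C ^\<^sub>m 2 = C * C" using Cc by (simp add: numeral_2_eq_2)
    thus ?thesis using Cc that by (simp add: assoc_mult_mat_vec[of _ N N _ N])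
  qed
  have Cfix: "Mc *\<^sub>v y = y" if y: "y \<in> carrier_vec N" and Cy: "C *\<^sub>v y = 0\<^sub>v N" for y
  proof (rule eq_vecI)
    fix k assume "k < dim_vec y"
    hence k: "k < N" using y by auto
    have "(C *\<^sub>v y) $ k = 0" using Cy k by simp
    thus "(Mc *\<^sub>v y) $ k = y $ k" using Cmv[OF y k] by simp
  qed (use Mc y in auto)
  have ker2: "\<exists>d. x = d \<cdot>\<^sub>v hc" if x: "x \<in> carrier_vec N" and Cx: "C ^\<^sub>m 2 *\<^sub>v x = 0\<^sub>v N" for x
  proof -
    define y where "y = C *\<^sub>v x"
    have y: "y \<in> carrier_vec N" unfolding y_def using Cc x by auto
    have "C *\<^sub>v y = 0\<^sub>v N" using Cx C2[OF x] y_def by simp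
    from fixp[OF y Cfix[OF y this]] obtain c where c: "y = c \<cdot>\<^sub>v hc" by auto
    have eqs: "(\<Sum>b<N. complex_of_real (P $$ (k,b)) * x $ b) = x $ k + c * complex_of_real (h k)"
      if k: "k < N" for k
    proof -
      have "y $ k = (Mc *\<^sub>v x) $ k - x $ k" unfolding y_def by (rule Cmv[OF x k])
      hence "(Mc *\<^sub>v x) $ k = x $ k + c * complex_of_real (h k)"
        using c k hc unfolding hc_def by simp
      thus ?thesis using mv[OF x k] by simp
    qed
    have "c = 0" by (rule gen_core[of N "\<lambda>k b. P $$ (k,b)" h "\<lambda>k. x $ k" c, OF N nn hp Ph eqs])
    hence "C *\<^sub>v x = 0\<^sub>v N" using c y_def hc by auto
    from fixp[OF x Cfix[OF x this]] show ?thesis .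
  qed
  have Chc: "C ^\<^sub>m 2 *\<^sub>v hc = 0\<^sub>v N"
  proof -
    have "C *\<^sub>v hc = 0\<^sub>v N"
      by (rule eq_vecI) (use Cmv[OF hc] Mhc hc Cc in auto)
    moreover have "C *\<^sub>v 0\<^sub>v N = 0\<^sub>v N"
      by (intro eq_vecI) (use Cc in \<open>auto simp: scalar_prod_def\<close>)
    ultimately show ?thesis using C2[OF hc] by simp
  qed
  have C2c: "C ^\<^sub>m 2 \<in> carrier_mat N N" using Cc by simp
  have dimle: "dim_gen_eigenspace Mc 1 2 \<le> 1"
    unfolding dim_gen_eigenspace_def C_def[symmetric]
    by (rule kernel_dim_le1[OF C2c hc Chc ker2])
  obtain as where "char_poly Mc = (\<Prod>a\<leftarrow>as. [:- a, 1:])" using char_poly_factorized[OF Mc] by auto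
  from jordan_nf_exists[OF Mc this] obtain n_as where jnf: "jordan_nf Mc n_as" by auto
  define L where "L = map fst (filter (\<lambda>na. snd na = 1) n_as)"
  have ord: "Polynomial.order 1 (char_poly Mc) = sum_list L" unfolding L_def by (rule jordan_nf_order[OF jnf])
  have "dim_gen_eigenspace Mc 1 2 = sum_list (map (min 2) L)"
    unfolding dim_gen_eigenspace[OF jnf] L_def
    by (induction n_as) auto
  hence "sum_list (map (min 2) L) \<le> 1" using dimle by simp
  moreover have "\<forall>n\<in>set L. n > 0" using jnf unfolding jordan_nf_def L_def by force
  ultimately have le1: "Polynomial.order 1 (char_poly Mc) \<le> 1" using sum_list_min2 ord by simp
  have "poly (char_poly Mc) 1 = 0" using ev1 eigenvalue_root_char_poly[OF Mc] by simp
  moreover have "char_poly Mc \<noteq> 0"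
    using degree_monic_char_poly[OF Mc] by auto
  ultimately have "Polynomial.order 1 (char_poly Mc) \<noteq> 0" by (simp add: order_root)
  with le1 have "Polynomial.order 1 (char_poly Mc) = 1" by simp
  show ?thesis unfolding simple_one_rest_inside_def Let_def Mc_def[symmetric]
    using ev1 \<open>Polynomial.order 1 (char_poly Mc) = 1\<close> inside by auto
qed



lemma fcol_carrier[simp]: "fcol n i \<in> carrier_mat n 1" unfolding fcol_def by simp
lemma fcol_dims[simp]: "dim_row (fcol n i) = n" "dim_col (fcol n i) = 1" unfolding fcol_def by simp_all
lemma fprod_carrier[simp]: "fcol n i * transpose_mat (fcol n j) \<in> carrier_mat n n"
  by (rule mult_carrier_mat[of _ n 1 _ n]) auto

lemma fprod_ent: assumes "a < n" "c < n"
  shows "(fcol n i * transpose_mat (fcol n j)) $$ (a,c) = (if a = i \<and> c = j then 1 else 0)"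
  using assms unfolding fcol_def by (simp add: scalar_prod_def)

lemma Lmat_carrier[simp]: "Lmat n w j i \<in> carrier_mat n n"
  unfolding Lmat_def by (rule minus_carrier_mat) simp
lemma Smat_alt: "Smat n j i = 1\<^sub>m n - (fcol n j * transpose_mat (fcol n j) - fcol n i * transpose_mat (fcol n j))"
  unfolding Smat_def by (subst minus_mult_distrib_mat[of _ n 1]) auto
lemma Smat_carrier[simp]: "Smat n j i \<in> carrier_mat n n"
  unfolding Smat_alt by (rule minus_carrier_mat, rule minus_carrier_mat) simp

lemma A_ent: assumes "a < n" "c < n"
  shows "(1\<^sub>m n - Lmat n w j i) $$ (a,c) =
    (if a = c then 1 else 0) - (if a = i \<and> c = i then w i j else 0) + (if a = i \<and> c = j then w i j else 0)"
proof -
  have "(1\<^sub>m n - Lmat n w j i) $$ (a,c) = 1\<^sub>m n $$ (a,c) - Lmat n w j i $$ (a,c)"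
    using assms Lmat_carrier[of n w j i] by (simp del: Lmat_carrier)
  also have "Lmat n w j i $$ (a,c) = w i j * (fcol n i * transpose_mat (fcol n i)) $$ (a,c)
      - w i j * (fcol n i * transpose_mat (fcol n j)) $$ (a,c)"
    unfolding Lmat_def using assms fprod_carrier[of n i i] fprod_carrier[of n i j]
    by (simp del: fprod_carrier)
  finally show ?thesis using assms by (simp add: fprod_ent del: index_mult_mat)
qed

lemma S_ent: assumes "a < n" "c < n"
  shows "Smat n j i $$ (a,c) =
    (if a = c then 1 else 0) - (if c = j then (if a = j then 1 else 0) - (if a = i then 1 else 0) else 0)"
proof -
  have "Smat n j i $$ (a,c) = 1\<^sub>m n $$ (a,c) - ((fcol n j * transpose_mat (fcol n j)) $$ (a,c)
      - (fcol n i * transpose_mat (fcol n j)) $$ (a,c))"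
    unfolding Smat_alt using assms fprod_carrier[of n j j] fprod_carrier[of n i j]
    by (simp del: fprod_carrier)
  thus ?thesis using assms by (simp add: fprod_ent del: index_mult_mat)
qed


lemma msum_kron_ent:
  assumes car: "\<And>j i. (j,i) \<in> E \<Longrightarrow> X j i \<in> carrier_mat n n \<and> Y j i \<in> carrier_mat n n"
    and x: "x < n*n" and y: "y < n*n"
  shows "msum (n*n) (\<lambda>(j,i). c j i \<cdot>\<^sub>m kron (X j i) (Y j i)) E $$ (x,y)
     = (\<Sum>e\<in>E. c (fst e) (snd e) * (X (fst e) (snd e) $$ (x div n, y div n) * Y (fst e) (snd e) $$ (x mod n, y mod n)))"
  unfolding msum_def using x y
  by (auto simp: kron_def split_beta intro!: sum.cong dest!: car)

lemma sum_div_mod: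
  fixes n m :: nat
  shows "(\<Sum>y<n*m. f (y div m) (y mod m)) = (\<Sum>c<n. \<Sum>d<m. (f c d :: 'a::comm_monoid_add))"
proof (induction n)
  case 0 then show ?case by simp
next
  case (Suc n)
  have split: "{..<Suc n * m} = {..<n*m} \<union> {n*m..<n*m+m}" by auto
  have "(\<Sum>y\<in>{n*m..<n*m+m}. f (y div m) (y mod m)) = (\<Sum>d<m. f n d)"
  proof -
    have "(\<Sum>y\<in>{n*m..<n*m+m}. f (y div m) (y mod m)) = (\<Sum>d\<in>{..<m}. f ((n*m+d) div m) ((n*m+d) mod m))"
      by (rule sum.reindex_bij_witness[of _ "\<lambda>d. n*m+d" "\<lambda>y. y - n*m"]) auto
    also have "\<dots> = (\<Sum>d<m. f n d)" by (rule sum.cong) auto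
    finally show ?thesis .
  qed
  moreover have "(\<Sum>y<Suc n * m. f (y div m) (y mod m)) = (\<Sum>y<n*m. f (y div m) (y mod m)) + (\<Sum>y\<in>{n*m..<n*m+m}. f (y div m) (y mod m))"
    unfolding split by (rule sum.union_disjoint) auto
  ultimately show ?case using Suc by simp
qed

lemma rowsum_gen:
  fixes c :: "'e \<Rightarrow> real" and n :: nat and F G :: "'e \<Rightarrow> nat \<Rightarrow> real"
    and u v :: "nat \<Rightarrow> real"
  shows "(\<Sum>y<n*n. (\<Sum>e\<in>E. c e * (F e (y div n) * G e (y mod n))) * (u (y div n) * v (y mod n)))
   = (\<Sum>e\<in>E. c e * ((\<Sum>a<n. F e a * u a) * (\<Sum>b<n. G e b * v b)))"
proof -
  have "(\<Sum>y<n*n. (\<Sum>e\<in>E. c e * (F e (y div n) * G e (y mod n))) * (u (y div n) * v (y mod n)))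
     = (\<Sum>a<n. \<Sum>b<n. (\<Sum>e\<in>E. c e * (F e a * G e b)) * (u a * v b))"
    by (rule sum_div_mod[where f = "\<lambda>a b. (\<Sum>e\<in>E. c e * (F e a * G e b)) * (u a * v b)"])
  also have "\<dots> = (\<Sum>a<n. \<Sum>b<n. \<Sum>e\<in>E. c e * ((F e a * u a) * (G e b * v b)))"
    by (simp add: sum_distrib_right sum_distrib_left algebra_simps)
  also have "\<dots> = (\<Sum>a<n. \<Sum>e\<in>E. \<Sum>b<n. c e * ((F e a * u a) * (G e b * v b)))"
    by (rule sum.cong[OF refl], rule sum.swap)
  also have "\<dots> = (\<Sum>e\<in>E. \<Sum>a<n. \<Sum>b<n. c e * ((F e a * u a) * (G e b * v b)))"
    by (rule sum.swap)
  also have "\<dots> = (\<Sum>e\<in>E. c e * ((\<Sum>a<n. F e a * u a) * (\<Sum>b<n. G e b * v b)))"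
  proof (rule sum.cong[OF refl])
    fix e
    have "c e * ((\<Sum>a<n. F e a * u a) * (\<Sum>b<n. G e b * v b))
        = c e * (\<Sum>a<n. \<Sum>b<n. (F e a * u a) * (G e b * v b))" by (simp only: sum_product)
    also have "\<dots> = (\<Sum>a<n. \<Sum>b<n. c e * ((F e a * u a) * (G e b * v b)))"
      by (simp add: sum_distrib_left)
    finally show "(\<Sum>a<n. \<Sum>b<n. c e * ((F e a * u a) * (G e b * v b)))
        = c e * ((\<Sum>a<n. F e a * u a) * (\<Sum>b<n. G e b * v b))" by simp
  qed
  finally show ?thesis .
qed



lemma simple_transpose:
  assumes P: "P \<in> carrier_mat N N" and T: "simple_one_rest_inside (transpose_mat P)"
  shows "simple_one_rest_inside P"
proof -
  define Mc where "Mc = map_mat complex_of_real P"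
  have Mc: "Mc \<in> carrier_mat N N" using P Mc_def by auto
  have T': "map_mat complex_of_real (transpose_mat P) = transpose_mat Mc"
    unfolding Mc_def by (simp add: map_mat_transpose)
  have McT: "transpose_mat Mc \<in> carrier_mat N N" using Mc by simp
  have cp: "char_poly (transpose_mat Mc) = char_poly Mc" using Mc by simp
  have ev: "eigenvalue (transpose_mat Mc) z = eigenvalue Mc z" for z
    using eigenvalue_root_char_poly[OF McT] eigenvalue_root_char_poly[OF Mc] cp by simp
  show ?thesis using T unfolding simple_one_rest_inside_def Let_def T' Mc_def[symmetric] ev cp .
qed

lemma enc_div[simp]: "b < (n::nat) \<Longrightarrow> (a*n+b) div n = a" by simp
lemma enc_mod[simp]: "b < (n::nat) \<Longrightarrow> (a*n+b) mod n = b" by simp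
lemma enc_lt: "a < (n::nat) \<Longrightarrow> b < n \<Longrightarrow> a*n+b < n*n"
proof -
  assume "a < n" "b < n"
  hence "a*n+b < a*n+n" by simp
  also have "\<dots> = (a+1)*n" by simp
  also have "\<dots> \<le> n*n" using \<open>a < n\<close> by (intro mult_right_mono) auto
  finally show ?thesis .
qed

lemma reach_move1:
  fixes n :: nat and E :: "(nat \<times> nat) set"
  assumes Esub: "E \<subseteq> {0..<n} \<times> {0..<n}"
    and st1: "\<And>j i b. (j,i) \<in> E \<Longrightarrow> b < n \<Longrightarrow> (i*n+b, j*n+b) \<in> R"
    and xa: "(x, a) \<in> E\<^sup>*" and b: "b < n"
  shows "(a*n+b, x*n+b) \<in> R\<^sup>*"
  using xa
proof (induction rule: rtrancl_induct)
  case base then show ?case by simp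
next
  case (step y z)
  have "(z*n+b, y*n+b) \<in> R" using st1[OF step(2) b] .
  thus ?case using step(3) by (rule converse_rtrancl_into_rtrancl)
qed

lemma reach_move2:
  fixes n :: nat and E :: "(nat \<times> nat) set"
  assumes Esub: "E \<subseteq> {0..<n} \<times> {0..<n}"
    and st2: "\<And>j i a. (j,i) \<in> E \<Longrightarrow> a < n \<Longrightarrow> (a*n+i, a*n+j) \<in> R"
    and xb: "(x, b) \<in> E\<^sup>*" and a: "a < n"
  shows "(a*n+b, a*n+x) \<in> R\<^sup>*"
  using xb
proof (induction rule: rtrancl_induct)
  case base then show ?case by simp
next
  case (step y z)
  have "(a*n+z, a*n+y) \<in> R" using st2[OF step(2) a] .
  thus ?case using step(3) by (rule converse_rtrancl_into_rtrancl)
qed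

lemma reach_diag:
  fixes n a :: nat
  assumes std: "\<And>j i. (j,i) \<in> E \<Longrightarrow> (i*n+i, j*n+j) \<in> R"
    and xa: "(0, a) \<in> E\<^sup>*"
  shows "(a*n+a, 0) \<in> R\<^sup>*"
  using xa
proof (induction rule: rtrancl_induct)
  case base then show ?case by auto
next
  case (step y z)
  have "(z*n+z, y*n+y) \<in> R" using std[OF step(2)] .
  thus ?case using step(3) by (rule converse_rtrancl_into_rtrancl)
qed

lemma reach_merge1:
  fixes n :: nat and E :: "(nat \<times> nat) set"
  assumes Esub: "E \<subseteq> {0..<n} \<times> {0..<n}"
    and st: "\<And>j i a b. (j,i) \<in> E \<Longrightarrow> a < n \<Longrightarrow> b < n \<Longrightarrow>
      (a*n+b, (if a = j then i else a)*n + (if b = j then i else b)) \<in> R"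
    and a0: "(a, 0) \<in> E\<^sup>*"
  shows "\<forall>b<n. \<exists>b'<n. (a*n+b, b') \<in> R\<^sup>*"
  using a0
proof (induction rule: converse_rtrancl_induct)
  case base then show ?case by (metis add_0 mult_zero_left rtrancl.rtrancl_refl)
next
  case (step a y)
  show ?case
  proof (intro allI impI)
    fix b assume b: "b < n"
    have an: "a < n" "y < n" using step(1) Esub by auto
    let ?b1 = "if b = a then y else b"
    have b1: "?b1 < n" using b an by auto
    have "(a*n+b, y*n+?b1) \<in> R" using st[OF step(1) an(1) b] by simp
    moreover obtain b' where "b' < n" "(y*n+?b1, b') \<in> R\<^sup>*" using step(3) b1 by blast
    ultimately show "\<exists>b'<n. (a*n+b, b') \<in> R\<^sup>*" by (meson converse_rtrancl_into_rtrancl)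
  qed
qed

lemma reach_merge2:
  fixes n :: nat and E :: "(nat \<times> nat) set"
  assumes Esub: "E \<subseteq> {0..<n} \<times> {0..<n}"
    and st: "\<And>j i a b. (j,i) \<in> E \<Longrightarrow> a < n \<Longrightarrow> b < n \<Longrightarrow>
      (a*n+b, (if a = j then i else a)*n + (if b = j then i else b)) \<in> R"
    and b0: "(b, 0) \<in> E\<^sup>*" and n: "0 < n"
  shows "(b, 0) \<in> R\<^sup>*"
  using b0
proof (induction rule: converse_rtrancl_induct)
  case base then show ?case by auto
next
  case (step b y)
  show ?case
  proof (cases "b = 0")
    case True then show ?thesis by simp
  next
    case False
    have bn: "b < n" using step(1) Esub by auto
    have "(0*n+b, 0*n+y) \<in> R" using st[OF step(1) n bn] False by simp
    hence "(b, y) \<in> R" by simp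
    thus ?thesis using step(3) by (rule converse_rtrancl_into_rtrancl)
  qed
qed



lemma msum_ent2:
  fixes X Y :: "nat \<Rightarrow> nat \<Rightarrow> real mat" and cc :: "nat \<Rightarrow> nat \<Rightarrow> real" and E :: "(nat \<times> nat) set" and n :: nat
  assumes car: "\<And>j i. (j,i) \<in> E \<Longrightarrow> X j i \<in> carrier_mat n n \<and> Y j i \<in> carrier_mat n n"
    and "a < n" "b < n" "c < n" "d < n"
  shows "msum (n*n) (\<lambda>(j,i). cc j i \<cdot>\<^sub>m kron (X j i) (Y j i)) E $$ (a*n+b, c*n+d)
     = (\<Sum>e\<in>E. cc (fst e) (snd e) * (X (fst e) (snd e) $$ (a, c) * Y (fst e) (snd e) $$ (b, d)))"
  using msum_kron_ent[OF car, where x="a*n+b" and y="c*n+d" and c=cc] assms enc_lt by simp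

lemma msum_nonneg:
  fixes X Y :: "nat \<Rightarrow> nat \<Rightarrow> real mat" and cc :: "nat \<Rightarrow> nat \<Rightarrow> real" and E :: "(nat \<times> nat) set" and n :: nat
  assumes car: "\<And>j i. (j,i) \<in> E \<Longrightarrow> X j i \<in> carrier_mat n n \<and> Y j i \<in> carrier_mat n n"
    and nn: "\<And>j i a c. (j,i) \<in> E \<Longrightarrow> a < n \<Longrightarrow> c < n \<Longrightarrow> X j i $$ (a,c) \<ge> 0 \<and> Y j i $$ (a,c) \<ge> 0"
    and cp: "\<And>j i. (j,i) \<in> E \<Longrightarrow> cc j i \<ge> 0"
    and x: "x < n*n" and y: "y < n*n"
  shows "msum (n*n) (\<lambda>(j,i). cc j i \<cdot>\<^sub>m kron (X j i) (Y j i)) E $$ (x, y) \<ge> 0"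
proof -
  have n: "n > 0" using x by (cases n) auto
  have d: "x div n < n" "y div n < n" using x y n by (auto simp: div_less_iff_less_mult mult.commute)
  have m: "x mod n < n" "y mod n < n" using n by auto
  have "0 \<le> (\<Sum>e\<in>E. cc (fst e) (snd e) * (X (fst e) (snd e) $$ (x div n, y div n) * Y (fst e) (snd e) $$ (x mod n, y mod n)))"
    by (rule sum_nonneg) (use nn cp d m in \<open>auto intro!: mult_nonneg_nonneg\<close>)
  thus ?thesis using msum_kron_ent[OF car x y, where c=cc] by simp
qed

lemma msum_pos:
  fixes X Y :: "nat \<Rightarrow> nat \<Rightarrow> real mat" and cc :: "nat \<Rightarrow> nat \<Rightarrow> real" and E :: "(nat \<times> nat) set" and n :: nat
  assumes fin: "finite E"
    and car: "\<And>j i. (j,i) \<in> E \<Longrightarrow> X j i \<in> carrier_mat n n \<and> Y j i \<in> carrier_mat n n"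
    and nn: "\<And>j i a c. (j,i) \<in> E \<Longrightarrow> a < n \<Longrightarrow> c < n \<Longrightarrow> X j i $$ (a,c) \<ge> 0 \<and> Y j i $$ (a,c) \<ge> 0"
    and cp: "\<And>j i. (j,i) \<in> E \<Longrightarrow> cc j i > 0"
    and e: "(j,i) \<in> E" and X: "X j i $$ (a,c) > 0" and Y: "Y j i $$ (b,d) > 0"
    and abcd: "a < n" "b < n" "c < n" "d < n"
  shows "msum (n*n) (\<lambda>(j,i). cc j i \<cdot>\<^sub>m kron (X j i) (Y j i)) E $$ (a*n+b, c*n+d) > 0"
proof -
  have "0 < (\<Sum>e\<in>E. cc (fst e) (snd e) * (X (fst e) (snd e) $$ (a, c) * Y (fst e) (snd e) $$ (b, d)))"
proof (rule sum_pos2[OF fin e])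
  show "0 < cc (fst (j, i)) (snd (j, i)) * (X (fst (j, i)) (snd (j, i)) $$ (a, c) * Y (fst (j, i)) (snd (j, i)) $$ (b, d))"
    using cp[OF e] X Y by simp
  show "0 \<le> cc (fst e) (snd e) * (X (fst e) (snd e) $$ (a, c) * Y (fst e) (snd e) $$ (b, d))"
    if e: "e \<in> E" for e
  proof -
    obtain j' i' where ji: "e = (j',i')" by force
    have "cc j' i' \<ge> 0" using cp[of j' i'] e ji by auto
    thus "0 \<le> cc (fst e) (snd e) * (X (fst e) (snd e) $$ (a, c) * Y (fst e) (snd e) $$ (b, d))"
      using nn[of j' i'] e ji abcd by (auto intro!: mult_nonneg_nonneg)
  qed
qed
  thus ?thesis using msum_ent2[OF car abcd, where cc=cc] by simp
qed

lemma A_facts: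
  assumes "i < n" "j < n" "i \<noteq> j" "0 < w i j" "w i j < 1"
  shows "\<And>a c. a < n \<Longrightarrow> c < n \<Longrightarrow> (1\<^sub>m n - Lmat n w j i) $$ (a,c) \<ge> 0"
    "\<And>a. a < n \<Longrightarrow> (1\<^sub>m n - Lmat n w j i) $$ (a,a) > 0"
    "(1\<^sub>m n - Lmat n w j i) $$ (i,j) > 0"
    "\<And>a. a < n \<Longrightarrow> (\<Sum>c<n. (1\<^sub>m n - Lmat n w j i) $$ (a,c)) = 1"
proof -
  fix a c assume "a < n" "c < n"
  thus "(1\<^sub>m n - Lmat n w j i) $$ (a,c) \<ge> 0" using assms by (simp add: A_ent)
next
  fix a assume "a < n"
  thus "(1\<^sub>m n - Lmat n w j i) $$ (a,a) > 0" using assms by (simp add: A_ent)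
next
  show "(1\<^sub>m n - Lmat n w j i) $$ (i,j) > 0" using assms by (simp add: A_ent)
next
  fix a assume a: "a < n"
  have "(\<Sum>c<n. (1\<^sub>m n - Lmat n w j i) $$ (a,c)) = (\<Sum>c<n. (if a = c then 1 else 0) - (if a = i \<and> c = i then w i j else 0) + (if a = i \<and> c = j then w i j else 0))"
    by (rule sum.cong) (use a in \<open>auto simp: A_ent\<close>)
  also have "\<dots> = 1" using a assms by (cases "a = i") (simp_all add: sum.distrib sum_subtractf)
  finally show "(\<Sum>c<n. (1\<^sub>m n - Lmat n w j i) $$ (a,c)) = 1" .
qed

lemma S_facts:
  assumes "i < n" "j < n" "i \<noteq> j"
  shows "\<And>a c. a < n \<Longrightarrow> c < n \<Longrightarrow> Smat n j i $$ (a,c) \<ge> 0"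
    "\<And>a. a < n \<Longrightarrow> a \<noteq> j \<Longrightarrow> Smat n j i $$ (a,a) = 1"
    "Smat n j i $$ (i,j) = 1"
    "\<And>c. c < n \<Longrightarrow> (\<Sum>a<n. Smat n j i $$ (a,c)) = 1"
proof -
  fix a c assume "a < n" "c < n"
  thus "Smat n j i $$ (a,c) \<ge> 0" using assms by (simp add: S_ent)
next
  fix a assume "a < n" "a \<noteq> j"
  thus "Smat n j i $$ (a,a) = 1" using assms by (simp add: S_ent)
next
  show "Smat n j i $$ (i,j) = 1" using assms by (simp add: S_ent)
next
  fix c assume c: "c < n"
  have "(\<Sum>a<n. Smat n j i $$ (a,c)) = (\<Sum>a<n. (if a = c then 1 else 0) - (if c = j then (if a = j then 1 else 0) - (if a = i then 1 else 0) else 0))"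
    by (rule sum.cong) (use c in \<open>auto simp: S_ent\<close>)
  also have "\<dots> = 1" using c assms by (cases "c = j") (simp_all add: sum.distrib sum_subtractf)
  finally show "(\<Sum>a<n. Smat n j i $$ (a,c)) = 1" .
qed


lemma perron_vec:
  fixes Q :: "nat \<Rightarrow> nat \<Rightarrow> real" and n :: nat and E :: "(nat \<times> nat) set"
  assumes n: "n > 0"
    and nn: "\<And>a d. a < n \<Longrightarrow> d < n \<Longrightarrow> Q a d \<ge> 0"
    and col: "\<And>d. d < n \<Longrightarrow> (\<Sum>a<n. Q a d) = 1"
    and Esub: "E \<subseteq> {0..<n} \<times> {0..<n}"
    and Epos: "\<And>j i. (j,i) \<in> E \<Longrightarrow> Q i j > 0"
    and sc: "\<forall>u<n. \<forall>v<n. (u, v) \<in> E\<^sup>*"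
  shows "\<exists>\<pi>. (\<forall>a<n. \<pi> a > 0) \<and> (\<forall>a<n. (\<Sum>d<n. Q a d * \<pi> d) = \<pi> a)"
proof -
  define QM where "QM = mat n n (\<lambda>(a,d). Q a d)"
  have QM: "QM \<in> carrier_mat n n" unfolding QM_def by simp
  have QMT: "transpose_mat QM \<in> carrier_mat n n" using QM by simp
  define one where "one = vec n (\<lambda>_. 1::real)"
  have T1: "transpose_mat QM *\<^sub>v one = 1 \<cdot>\<^sub>v one"
    by (rule eq_vecI) (use col in \<open>auto simp: QM_def one_def scalar_prod_def lessThan_atLeast0\<close>)
  have o0: "one \<noteq> 0\<^sub>v n"
  proof
    assume "one = 0\<^sub>v n"
    hence "one $ 0 = 0\<^sub>v n $ 0" by simp
    thus False using n unfolding one_def by simp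
  qed
  have "eigenvalue (transpose_mat QM) 1"
    unfolding eigenvalue_def eigenvector_def using QM T1 o0
    by (intro exI[of _ one]) (auto simp: one_def)
  hence "poly (char_poly (transpose_mat QM)) 1 = 0" using eigenvalue_root_char_poly[OF QMT] by simp
  hence "eigenvalue QM 1" using eigenvalue_root_char_poly[OF QM] QM by simp
  then obtain v where v: "v \<in> carrier_vec n" "v \<noteq> 0\<^sub>v n" "QM *\<^sub>v v = 1 \<cdot>\<^sub>v v"
    unfolding eigenvalue_def eigenvector_def using QM by auto
  have veq: "(\<Sum>d<n. Q a d * v $ d) = v $ a" if a: "a < n" for a
  proof -
    have "(QM *\<^sub>v v) $ a = v $ a" using v(3) a v(1) by simp
    thus ?thesis using a v(1) by (simp add: QM_def scalar_prod_def lessThan_atLeast0)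
  qed
  define u where "u a = \<bar>v $ a\<bar>" for a
  have uge: "u a \<le> (\<Sum>d<n. Q a d * u d)" if a: "a < n" for a
  proof -
    have "u a = \<bar>\<Sum>d<n. Q a d * v $ d\<bar>" using veq[OF a] u_def by simp
    also have "\<dots> \<le> (\<Sum>d<n. \<bar>Q a d * v $ d\<bar>)" by (rule sum_abs)
    also have "\<dots> = (\<Sum>d<n. Q a d * u d)"
      by (rule sum.cong) (use nn a in \<open>auto simp: u_def abs_mult\<close>)
    finally show ?thesis .
  qed
  have "(\<Sum>a<n. \<Sum>d<n. Q a d * u d) = (\<Sum>d<n. \<Sum>a<n. Q a d * u d)" by (rule sum.swap)
  also have "\<dots> = (\<Sum>d<n. u d)"
    by (rule sum.cong) (use col in \<open>auto simp flip: sum_distrib_right\<close>)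
  finally have tot: "(\<Sum>a<n. (\<Sum>d<n. Q a d * u d) - u a) = 0" by (simp add: sum_subtractf)
  have ueq: "(\<Sum>d<n. Q a d * u d) = u a" if a: "a < n" for a
  proof -
    have "\<forall>a\<in>{..<n}. (\<Sum>d<n. Q a d * u d) - u a = 0"
      using sum_nonneg_eq_0_iff[of "{..<n}" "\<lambda>a. (\<Sum>d<n. Q a d * u d) - u a"] tot uge by auto
    thus ?thesis using a by auto
  qed
  obtain a0 where a0: "a0 < n" "v $ a0 \<noteq> 0"
  proof -
    have "\<exists>a<n. v $ a \<noteq> 0"
    proof (rule ccontr)
      assume "\<not> (\<exists>a<n. v $ a \<noteq> 0)"
      hence "v = 0\<^sub>v n" by (intro eq_vecI) (use v(1) in auto)
      thus False using v(2) by simp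
    qed
    thus ?thesis using that by auto
  qed
  have zero_prop: "u a0 = 0" if k: "k < n" "u k = 0" for k
  proof -
    have "(a0, k) \<in> E\<^sup>*" using sc a0(1) k(1) by auto
    hence "u k = 0 \<longrightarrow> u a0 = 0"
    proof (induction rule: rtrancl_induct)
      case base then show ?case by simp
    next
      case (step y z)
      have yz: "y < n" "z < n" using step(2) Esub by auto
      show ?case
      proof
        assume uz: "u z = 0"
        have nonneg: "\<forall>d\<in>{..<n}. Q z d * u d \<ge> 0" using nn yz by (auto simp: u_def)
        have "(\<Sum>d<n. Q z d * u d) = 0" using ueq[OF yz(2)] uz by simp
        hence "\<forall>d\<in>{..<n}. Q z d * u d = 0"
          using sum_nonneg_eq_0_iff[of "{..<n}" "\<lambda>d. Q z d * u d"] nonneg by simp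
        hence "Q z y * u y = 0" using yz by auto
        hence "u y = 0" using Epos[OF step(2)] by simp
        thus "u a0 = 0" using step(3) by simp
      qed
    qed
    thus ?thesis using k by simp
  qed
  have "\<forall>a<n. u a > 0"
  proof (intro allI impI)
    fix a assume a: "a < n"
    show "u a > 0"
    proof (rule ccontr)
      assume "\<not> u a > 0"
      hence "u a = 0" unfolding u_def by simp
      hence "u a0 = 0" using zero_prop a by simp
      thus False using a0 u_def by simp
    qed
  qed
  thus ?thesis using ueq by blast
qed


lemma Ph_gen:
  fixes X Y :: "nat \<Rightarrow> nat \<Rightarrow> real mat" and cc :: "nat \<Rightarrow> nat \<Rightarrow> real" and E :: "(nat \<times> nat) set" and n :: nat
  assumes car: "\<And>j i. (j,i) \<in> E \<Longrightarrow> X j i \<in> carrier_mat n n \<and> Y j i \<in> carrier_mat n n"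
    and x: "x < n*n"
  shows "(\<Sum>y<n*n. msum (n*n) (\<lambda>(j,i). cc j i \<cdot>\<^sub>m kron (X j i) (Y j i)) E $$ (x,y) * (u (y div n) * v (y mod n)))
    = (\<Sum>e\<in>E. cc (fst e) (snd e) * ((\<Sum>a<n. X (fst e) (snd e) $$ (x div n, a) * u a) * (\<Sum>b<n. Y (fst e) (snd e) $$ (x mod n, b) * v b)))"
proof -
  have eq: "(\<Sum>y<n*n. msum (n*n) (\<lambda>(j,i). cc j i \<cdot>\<^sub>m kron (X j i) (Y j i)) E $$ (x,y) * (u (y div n) * v (y mod n)))
    = (\<Sum>y<n*n. (\<Sum>e\<in>E. cc (fst e) (snd e) * (X (fst e) (snd e) $$ (x div n, y div n) * Y (fst e) (snd e) $$ (x mod n, y mod n))) * (u (y div n) * v (y mod n)))"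
    by (rule sum.cong[OF refl]) (simp add: msum_kron_ent[OF car x])
  show ?thesis unfolding eq
    by (rule rowsum_gen[where F = "\<lambda>e a. X (fst e) (snd e) $$ (x div n, a)" and G = "\<lambda>e b. Y (fst e) (snd e) $$ (x mod n, b)"])
qed

lemma Ph_genT:
  fixes X Y :: "nat \<Rightarrow> nat \<Rightarrow> real mat" and cc :: "nat \<Rightarrow> nat \<Rightarrow> real" and E :: "(nat \<times> nat) set" and n :: nat
  assumes car: "\<And>j i. (j,i) \<in> E \<Longrightarrow> X j i \<in> carrier_mat n n \<and> Y j i \<in> carrier_mat n n"
    and x: "x < n*n"
  shows "(\<Sum>y<n*n. msum (n*n) (\<lambda>(j,i). cc j i \<cdot>\<^sub>m kron (X j i) (Y j i)) E $$ (y,x) * (u (y div n) * v (y mod n)))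
    = (\<Sum>e\<in>E. cc (fst e) (snd e) * ((\<Sum>a<n. X (fst e) (snd e) $$ (a, x div n) * u a) * (\<Sum>b<n. Y (fst e) (snd e) $$ (b, x mod n) * v b)))"
proof -
  have eq: "(\<Sum>y<n*n. msum (n*n) (\<lambda>(j,i). cc j i \<cdot>\<^sub>m kron (X j i) (Y j i)) E $$ (y,x) * (u (y div n) * v (y mod n)))
    = (\<Sum>y<n*n. (\<Sum>e\<in>E. cc (fst e) (snd e) * (X (fst e) (snd e) $$ (y div n, x div n) * Y (fst e) (snd e) $$ (y mod n, x mod n))) * (u (y div n) * v (y mod n)))"
    by (rule sum.cong[OF refl]) (simp add: msum_kron_ent[OF car _ x])
  show ?thesis unfolding eq
    by (rule rowsum_gen[where F = "\<lambda>e a. X (fst e) (snd e) $$ (a, x div n)" and G = "\<lambda>e b. Y (fst e) (snd e) $$ (b, x mod n)"])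
qed



context
  fixes n :: nat and E :: "(nat \<times> nat) set" and p w :: "nat \<Rightarrow> nat \<Rightarrow> real"
  assumes n1: "n > 1"
    and Esub: "E \<subseteq> {0..<n} \<times> {0..<n}"
    and noloop: "\<forall>(j,i)\<in>E. j \<noteq> i"
    and pp: "\<forall>(j,i)\<in>E. 0 < p i j \<and> p i j < 1"
    and psum: "(\<Sum>(j,i)\<in>E. p i j) = 1"
    and ww: "\<forall>(j,i)\<in>E. 0 < w i j \<and> w i j < 1"
    and sc: "\<forall>u<n. \<forall>v<n. (u, v) \<in> E\<^sup>*"
begin

lemma finE: "finite E"
  using Esub by (rule finite_subset) auto

lemma edge: "(j,i) \<in> E \<Longrightarrow> i < n \<and> j < n \<and> i \<noteq> j \<and> 0 < p i j \<and> 0 < w i j \<and> w i j < 1"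
  using Esub noloop pp ww by fastforce

lemma psum': "(\<Sum>e\<in>E. p (snd e) (fst e)) = 1"
  using psum by (simp add: split_beta)

lemma e0: "\<exists>i. (1, i) \<in> E"
proof -
  have "(1, 0) \<in> E\<^sup>*" using sc n1 by auto
  thus ?thesis by (cases rule: converse_rtranclE) auto
qed

lemma carA: "(j,i) \<in> E \<Longrightarrow> (1\<^sub>m n - Lmat n w j i) \<in> carrier_mat n n"
  by (rule minus_carrier_mat) simp

lemma nnA: "(j,i) \<in> E \<Longrightarrow> a < n \<Longrightarrow> c < n \<Longrightarrow> (1\<^sub>m n - Lmat n w j i) $$ (a,c) \<ge> 0"
  using A_facts(1)[of i n j w a c] edge by auto
lemma nnS: "(j,i) \<in> E \<Longrightarrow> a < n \<Longrightarrow> c < n \<Longrightarrow> Smat n j i $$ (a,c) \<ge> 0"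
  using S_facts(1)[of i n j a c] edge by auto

lemma case1: "simple_one_rest_inside
           (msum (n*n) (\<lambda>(j,i). p i j \<cdot>\<^sub>m kron (1\<^sub>m n - Lmat n w j i) (1\<^sub>m n - Lmat n w j i)) E)"
  (is "simple_one_rest_inside ?M")
proof -
  let ?X = "\<lambda>j i. 1\<^sub>m n - Lmat n w j i"
  have car: "?X j i \<in> carrier_mat n n \<and> ?X j i \<in> carrier_mat n n" if "(j,i) \<in> E" for j i
    using carA[OF that] by simp
  have nn: "?X j i $$ (a,c) \<ge> 0 \<and> ?X j i $$ (a,c) \<ge> 0" if "(j,i) \<in> E" "a < n" "c < n" for j i a c
    using nnA[OF that] by simp
  have cp: "p i j > 0" if "(j,i) \<in> E" for j i using edge[OF that] by simp
  have Mc: "?M \<in> carrier_mat (n*n) (n*n)" by (simp add: msum_def)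
  have n0: "0 < n" using n1 by simp
  let ?R = "{(k,b). k < n*n \<and> b < n*n \<and> ?M $$ (k,b) > 0}"
  have pos: "(a*n+b, c*n+d) \<in> ?R" if "(j,i) \<in> E" "?X j i $$ (a,c) > 0" "?X j i $$ (b,d) > 0"
    "a < n" "b < n" "c < n" "d < n" for j i a b c d
    using msum_pos[where X="?X" and Y="?X" and cc="\<lambda>j i. p i j" and E=E and n=n, OF finE car nn cp that] enc_lt that by auto
  show ?thesis
  proof (rule abstract_simple[OF Mc, where h = "\<lambda>_. 1" and r = 0])
    show "\<And>k b. k < n*n \<Longrightarrow> b < n*n \<Longrightarrow> ?M $$ (k,b) \<ge> 0"
      by (rule msum_nonneg[where X="?X" and Y="?X" and cc="\<lambda>j i. p i j" and E=E and n=n, OF car nn]) (use cp in \<open>auto intro: less_imp_le\<close>)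
    show "\<And>k. k < n*n \<Longrightarrow> (0::real) < 1" by simp
    show "(\<Sum>b<n*n. ?M $$ (k,b) * 1) = 1" if k: "k < n*n" for k
    proof -
      have kd: "k div n < n" "k mod n < n" using k n0 by (auto simp: div_less_iff_less_mult mult.commute)
      have "(\<Sum>b<n*n. ?M $$ (k,b) * 1) = (\<Sum>b<n*n. ?M $$ (k,b) * ((\<lambda>_. 1) (b div n) * (\<lambda>_. 1) (b mod n)))"
        by simp
      also have "\<dots> = (\<Sum>e\<in>E. p (snd e) (fst e) * ((\<Sum>a<n. ?X (fst e) (snd e) $$ (k div n, a) * 1) * (\<Sum>b<n. ?X (fst e) (snd e) $$ (k mod n, b) * 1)))"
        by (rule Ph_gen[where X="?X" and Y="?X" and cc="\<lambda>j i. p i j" and E=E and n=n, OF car k])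
      also have "\<dots> = (\<Sum>e\<in>E. p (snd e) (fst e))"
      proof (rule sum.cong[OF refl])
        fix e assume e: "e \<in> E"
        obtain j i where ji: "e = (j,i)" by force
        have ed: "i < n" "j < n" "i \<noteq> j" "0 < w i j" "w i j < 1" using edge e ji by auto
        show "p (snd e) (fst e) * ((\<Sum>a<n. ?X (fst e) (snd e) $$ (k div n, a) * 1) * (\<Sum>b<n. ?X (fst e) (snd e) $$ (k mod n, b) * 1)) = p (snd e) (fst e)"
          using A_facts(4)[of i n j w "k div n"] A_facts(4)[of i n j w "k mod n"] ed kd ji by simp
      qed
      also have "\<dots> = 1" by (rule psum')
      finally show ?thesis .
    qed
    show "0 < n*n" using n0 by simp
    obtain i0 where i0: "(1, i0) \<in> E" using e0 by auto
    have ed0: "i0 < n" "1 < n" "i0 \<noteq> 1" "0 < w i0 1" "w i0 1 < 1" using edge[OF i0] by auto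
    have "(0*n+0, 0*n+0) \<in> ?R"
      by (rule pos[OF i0]) (use A_facts(2)[of i0 n 1 w 0] ed0 n0 in auto)
    thus "0 < ?M $$ (0,0)" by simp
    fix k assume k: "k < n*n"
    have kd: "k div n < n" "k mod n < n" using k n0 by (auto simp: div_less_iff_less_mult mult.commute)
    have st1: "(i*n+b, j*n+b) \<in> ?R" if "(j,i) \<in> E" "b < n" for j i b
    proof -
      have ed: "i < n" "j < n" "i \<noteq> j" "0 < w i j" "w i j < 1" using edge[OF that(1)] by auto
      show ?thesis by (rule pos[OF that(1)]) (use A_facts(2,3)[of i n j w] that ed in auto)
    qed
    have st2: "(a*n+i, a*n+j) \<in> ?R" if "(j,i) \<in> E" "a < n" for j i a
    proof -
      have ed: "i < n" "j < n" "i \<noteq> j" "0 < w i j" "w i j < 1" using edge[OF that(1)] by auto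
      show ?thesis by (rule pos[OF that(1)]) (use A_facts(2,3)[of i n j w] that ed in auto)
    qed
    have "(k div n * n + k mod n, 0 * n + k mod n) \<in> ?R\<^sup>*"
      by (rule reach_move1[OF Esub st1]) (use sc kd n0 in auto)
    moreover have "(0 * n + k mod n, 0 * n + 0) \<in> ?R\<^sup>*"
      by (rule reach_move2[OF Esub st2]) (use sc kd n0 in auto)
    ultimately have "(k div n * n + k mod n, 0) \<in> ?R\<^sup>*" by simp
    thus "(k, 0) \<in> ?R\<^sup>*" by simp
  qed
qed


lemma sum_swap_mult:
  fixes c :: "'e \<Rightarrow> real"
  shows "(\<Sum>e\<in>Z. c e * (\<Sum>b<m. f e b * g b)) = (\<Sum>b<m. (\<Sum>e\<in>Z. c e * f e b) * g b)"
proof -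
  have "(\<Sum>e\<in>Z. c e * (\<Sum>b<m. f e b * g b)) = (\<Sum>e\<in>Z. \<Sum>b<m. c e * f e b * g b)"
    by (simp add: sum_distrib_left mult.assoc)
  also have "\<dots> = (\<Sum>b<m. \<Sum>e\<in>Z. c e * f e b * g b)" by (rule sum.swap)
  also have "\<dots> = (\<Sum>b<m. (\<Sum>e\<in>Z. c e * f e b) * g b)" by (simp add: sum_distrib_right)
  finally show ?thesis .
qed

definition Qm :: "nat \<Rightarrow> nat \<Rightarrow> real" where
  "Qm a d = (\<Sum>e\<in>E. p (snd e) (fst e) * Smat n (fst e) (snd e) $$ (a,d))"

lemma pi_exists: "\<exists>\<pi>. (\<forall>a<n. \<pi> a > 0) \<and> (\<forall>a<n. (\<Sum>d<n. Qm a d * \<pi> d) = \<pi> a)"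
proof (rule perron_vec[OF _ _ _ Esub _ sc])
  show "0 < n" using n1 by simp
  show "Qm a d \<ge> 0" if "a < n" "d < n" for a d
    unfolding Qm_def
  proof (rule sum_nonneg)
    fix e assume e: "e \<in> E"
    obtain j i where ji: "e = (j,i)" by force
    show "0 \<le> p (snd e) (fst e) * Smat n (fst e) (snd e) $$ (a, d)"
      using nnS[of j i a d] edge[of j i] e ji that by simp
  qed
  show "(\<Sum>a<n. Qm a d) = 1" if d: "d < n" for d
  proof -
    have "(\<Sum>a<n. Qm a d) = (\<Sum>e\<in>E. p (snd e) (fst e) * (\<Sum>a<n. Smat n (fst e) (snd e) $$ (a,d)))"
      unfolding Qm_def by (simp add: sum_distrib_left sum.swap[of _ "{..<n}"])
    also have "\<dots> = (\<Sum>e\<in>E. p (snd e) (fst e))"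
    proof (rule sum.cong[OF refl])
      fix e assume e: "e \<in> E"
      obtain j i where ji: "e = (j,i)" by force
      have ed: "i < n" "j < n" "i \<noteq> j" using edge e ji by auto
      show "p (snd e) (fst e) * (\<Sum>a<n. Smat n (fst e) (snd e) $$ (a,d)) = p (snd e) (fst e)"
        using S_facts(4)[of i n j d] ed d ji by simp
    qed
    also have "\<dots> = 1" by (rule psum')
    finally show ?thesis .
  qed
  show "Qm i j > 0" if e: "(j,i) \<in> E" for j i
    unfolding Qm_def
  proof (rule sum_pos2[OF finE e])
    have ed: "i < n" "j < n" "i \<noteq> j" "0 < p i j" using edge[OF e] by auto
    show "0 < p (snd (j,i)) (fst (j,i)) * Smat n (fst (j,i)) (snd (j,i)) $$ (i, j)"
      using S_facts(3)[of i n j] ed by simp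
    show "0 \<le> p (snd e') (fst e') * Smat n (fst e') (snd e') $$ (i, j)" if "e' \<in> E" for e'
    proof -
      obtain j' i' where ji: "e' = (j',i')" by force
      show ?thesis using nnS[of j' i' i j] edge[of j' i'] that ji ed by simp
    qed
  qed
qed


lemma case2: "simple_one_rest_inside
           (msum (n*n) (\<lambda>(j,i). p i j \<cdot>\<^sub>m kron (1\<^sub>m n - Lmat n w j i) (Smat n j i)) E)"
  (is "simple_one_rest_inside ?M")
proof -
  let ?X = "\<lambda>j i. 1\<^sub>m n - Lmat n w j i"
  let ?Y = "\<lambda>j i. Smat n j i"
  have car: "?X j i \<in> carrier_mat n n \<and> ?Y j i \<in> carrier_mat n n" if "(j,i) \<in> E" for j i
    using carA[OF that] by simp
  have nn: "?X j i $$ (a,c) \<ge> 0 \<and> ?Y j i $$ (a,c) \<ge> 0" if "(j,i) \<in> E" "a < n" "c < n" for j i a c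
    using nnA[OF that] nnS[OF that] by simp
  have cp: "p i j > 0" if "(j,i) \<in> E" for j i using edge[OF that] by simp
  have Mc: "?M \<in> carrier_mat (n*n) (n*n)" by (simp add: msum_def)
  have n0: "0 < n" using n1 by simp
  obtain \<pi> where pip: "\<And>a. a < n \<Longrightarrow> \<pi> a > 0" and pieq: "\<And>a. a < n \<Longrightarrow> (\<Sum>d<n. Qm a d * \<pi> d) = \<pi> a"
    using pi_exists by blast
  let ?R = "{(k,b). k < n*n \<and> b < n*n \<and> ?M $$ (k,b) > 0}"
  have pos: "(a*n+b, c*n+d) \<in> ?R" if "(j,i) \<in> E" "?X j i $$ (a,c) > 0" "?Y j i $$ (b,d) > 0"
    "a < n" "b < n" "c < n" "d < n" for j i a b c d
    using msum_pos[where X="?X" and Y="?Y" and cc="\<lambda>j i. p i j" and E=E and n=n, OF finE car nn cp that] enc_lt that by auto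
  show ?thesis
  proof (rule abstract_simple[OF Mc, where h = "\<lambda>y. \<pi> (y mod n)" and r = 0])
    show "\<And>k b. k < n*n \<Longrightarrow> b < n*n \<Longrightarrow> ?M $$ (k,b) \<ge> 0"
      by (rule msum_nonneg[where X="?X" and Y="?Y" and cc="\<lambda>j i. p i j" and E=E and n=n, OF car nn]) (use cp in \<open>auto intro: less_imp_le\<close>)
    show "\<And>k. k < n*n \<Longrightarrow> 0 < \<pi> (k mod n)" using pip n0 by simp
    show "(\<Sum>b<n*n. ?M $$ (k,b) * \<pi> (b mod n)) = \<pi> (k mod n)" if k: "k < n*n" for k
    proof -
      have kd: "k div n < n" "k mod n < n" using k n0 by (auto simp: div_less_iff_less_mult mult.commute)
      have "(\<Sum>b<n*n. ?M $$ (k,b) * \<pi> (b mod n)) = (\<Sum>b<n*n. ?M $$ (k,b) * ((\<lambda>_. 1) (b div n) * \<pi> (b mod n)))"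
        by simp
      also have "\<dots> = (\<Sum>e\<in>E. p (snd e) (fst e) * ((\<Sum>a<n. ?X (fst e) (snd e) $$ (k div n, a) * 1) * (\<Sum>b<n. ?Y (fst e) (snd e) $$ (k mod n, b) * \<pi> b)))"
        by (rule Ph_gen[where X="?X" and Y="?Y" and cc="\<lambda>j i. p i j" and E=E and n=n, OF car k])
      also have "\<dots> = (\<Sum>e\<in>E. p (snd e) (fst e) * (\<Sum>b<n. ?Y (fst e) (snd e) $$ (k mod n, b) * \<pi> b))"
      proof (rule sum.cong[OF refl])
        fix e assume e: "e \<in> E"
        obtain j i where ji: "e = (j,i)" by force
        have ed: "i < n" "j < n" "i \<noteq> j" "0 < w i j" "w i j < 1" using edge e ji by auto
        show "p (snd e) (fst e) * ((\<Sum>a<n. ?X (fst e) (snd e) $$ (k div n, a) * 1) * (\<Sum>b<n. ?Y (fst e) (snd e) $$ (k mod n, b) * \<pi> b)) = p (snd e) (fst e) * (\<Sum>b<n. ?Y (fst e) (snd e) $$ (k mod n, b) * \<pi> b)"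
          using A_facts(4)[of i n j w "k div n"] ed kd ji by simp
      qed
      also have "\<dots> = (\<Sum>b<n. Qm (k mod n) b * \<pi> b)" unfolding Qm_def by (rule sum_swap_mult)
      also have "\<dots> = \<pi> (k mod n)" by (rule pieq[OF kd(2)])
      finally show ?thesis .
    qed
    show "0 < n*n" using n0 by simp
    obtain i0 where i0: "(1, i0) \<in> E" using e0 by auto
    have ed0: "i0 < n" "1 < n" "i0 \<noteq> 1" "0 < w i0 1" "w i0 1 < 1" using edge[OF i0] by auto
    have "(0*n+0, 0*n+0) \<in> ?R"
      by (rule pos[OF i0]) (use A_facts(2)[of i0 n 1 w 0] S_facts(2)[of i0 n 1 0] ed0 n0 in auto)
    thus "0 < ?M $$ (0,0)" by simp
    fix k assume k: "k < n*n"
    have kd: "k div n < n" "k mod n < n" using k n0 by (auto simp: div_less_iff_less_mult mult.commute)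
    have st2: "(a*n+i, a*n+j) \<in> ?R" if "(j,i) \<in> E" "a < n" for j i a
    proof -
      have ed: "i < n" "j < n" "i \<noteq> j" "0 < w i j" "w i j < 1" using edge[OF that(1)] by auto
      show ?thesis by (rule pos[OF that(1)]) (use A_facts(2)[of i n j w a] S_facts(3)[of i n j] that ed in auto)
    qed
    have std: "(i*n+i, j*n+j) \<in> ?R" if "(j,i) \<in> E" for j i
    proof -
      have ed: "i < n" "j < n" "i \<noteq> j" "0 < w i j" "w i j < 1" using edge[OF that(1)] by auto
      show ?thesis by (rule pos[OF that(1)]) (use A_facts(3)[of i n j w] S_facts(3)[of i n j] that ed in auto)
    qed
    have "(k div n * n + k mod n, k div n * n + k div n) \<in> ?R\<^sup>*"
      by (rule reach_move2[OF Esub st2]) (use sc kd n0 in auto)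
    moreover have "(k div n * n + k div n, 0) \<in> ?R\<^sup>*"
      by (rule reach_diag[OF std]) (use sc kd n0 in auto)
    ultimately have "(k div n * n + k mod n, 0) \<in> ?R\<^sup>*" by simp
    thus "(k, 0) \<in> ?R\<^sup>*" by simp
  qed
qed

lemma case3: "simple_one_rest_inside
           (msum (n*n) (\<lambda>(j,i). p i j \<cdot>\<^sub>m kron (Smat n j i) (1\<^sub>m n - Lmat n w j i)) E)"
  (is "simple_one_rest_inside ?M")
proof -
  let ?X = "\<lambda>j i. Smat n j i"
  let ?Y = "\<lambda>j i. 1\<^sub>m n - Lmat n w j i"
  have car: "?X j i \<in> carrier_mat n n \<and> ?Y j i \<in> carrier_mat n n" if "(j,i) \<in> E" for j i
    using carA[OF that] by simp
  have nn: "?X j i $$ (a,c) \<ge> 0 \<and> ?Y j i $$ (a,c) \<ge> 0" if "(j,i) \<in> E" "a < n" "c < n" for j i a c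
    using nnA[OF that] nnS[OF that] by simp
  have cp: "p i j > 0" if "(j,i) \<in> E" for j i using edge[OF that] by simp
  have Mc: "?M \<in> carrier_mat (n*n) (n*n)" by (simp add: msum_def)
  have n0: "0 < n" using n1 by simp
  obtain \<pi> where pip: "\<And>a. a < n \<Longrightarrow> \<pi> a > 0" and pieq: "\<And>a. a < n \<Longrightarrow> (\<Sum>d<n. Qm a d * \<pi> d) = \<pi> a"
    using pi_exists by blast
  let ?R = "{(k,b). k < n*n \<and> b < n*n \<and> ?M $$ (k,b) > 0}"
  have pos: "(a*n+b, c*n+d) \<in> ?R" if "(j,i) \<in> E" "?X j i $$ (a,c) > 0" "?Y j i $$ (b,d) > 0"
    "a < n" "b < n" "c < n" "d < n" for j i a b c d
    using msum_pos[where X="?X" and Y="?Y" and cc="\<lambda>j i. p i j" and E=E and n=n, OF finE car nn cp that] enc_lt that by auto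
  show ?thesis
  proof (rule abstract_simple[OF Mc, where h = "\<lambda>y. \<pi> (y div n)" and r = 0])
    show "\<And>k b. k < n*n \<Longrightarrow> b < n*n \<Longrightarrow> ?M $$ (k,b) \<ge> 0"
      by (rule msum_nonneg[where X="?X" and Y="?Y" and cc="\<lambda>j i. p i j" and E=E and n=n, OF car nn]) (use cp in \<open>auto intro: less_imp_le\<close>)
    show "\<And>k. k < n*n \<Longrightarrow> 0 < \<pi> (k div n)" using pip n0 by (simp add: div_less_iff_less_mult mult.commute)
    show "(\<Sum>b<n*n. ?M $$ (k,b) * \<pi> (b div n)) = \<pi> (k div n)" if k: "k < n*n" for k
    proof -
      have kd: "k div n < n" "k mod n < n" using k n0 by (auto simp: div_less_iff_less_mult mult.commute)
      have "(\<Sum>b<n*n. ?M $$ (k,b) * \<pi> (b div n)) = (\<Sum>b<n*n. ?M $$ (k,b) * (\<pi> (b div n) * (\<lambda>_. 1) (b mod n)))"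
        by simp
      also have "\<dots> = (\<Sum>e\<in>E. p (snd e) (fst e) * ((\<Sum>a<n. ?X (fst e) (snd e) $$ (k div n, a) * \<pi> a) * (\<Sum>b<n. ?Y (fst e) (snd e) $$ (k mod n, b) * 1)))"
        by (rule Ph_gen[where X="?X" and Y="?Y" and cc="\<lambda>j i. p i j" and E=E and n=n, OF car k])
      also have "\<dots> = (\<Sum>e\<in>E. p (snd e) (fst e) * (\<Sum>b<n. ?X (fst e) (snd e) $$ (k div n, b) * \<pi> b))"
      proof (rule sum.cong[OF refl])
        fix e assume e: "e \<in> E"
        obtain j i where ji: "e = (j,i)" by force
        have ed: "i < n" "j < n" "i \<noteq> j" "0 < w i j" "w i j < 1" using edge e ji by auto
        show "p (snd e) (fst e) * ((\<Sum>a<n. ?X (fst e) (snd e) $$ (k div n, a) * \<pi> a) * (\<Sum>b<n. ?Y (fst e) (snd e) $$ (k mod n, b) * 1)) = p (snd e) (fst e) * (\<Sum>b<n. ?X (fst e) (snd e) $$ (k div n, b) * \<pi> b)"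
          using A_facts(4)[of i n j w "k mod n"] ed kd ji by simp
      qed
      also have "\<dots> = (\<Sum>b<n. Qm (k div n) b * \<pi> b)" unfolding Qm_def by (rule sum_swap_mult)
      also have "\<dots> = \<pi> (k div n)" by (rule pieq[OF kd(1)])
      finally show ?thesis .
    qed
    show "0 < n*n" using n0 by simp
    obtain i0 where i0: "(1, i0) \<in> E" using e0 by auto
    have ed0: "i0 < n" "1 < n" "i0 \<noteq> 1" "0 < w i0 1" "w i0 1 < 1" using edge[OF i0] by auto
    have "(0*n+0, 0*n+0) \<in> ?R"
      by (rule pos[OF i0]) (use A_facts(2)[of i0 n 1 w 0] S_facts(2)[of i0 n 1 0] ed0 n0 in auto)
    thus "0 < ?M $$ (0,0)" by simp
    fix k assume k: "k < n*n"
    have kd: "k div n < n" "k mod n < n" using k n0 by (auto simp: div_less_iff_less_mult mult.commute)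
    have st1: "(i*n+b, j*n+b) \<in> ?R" if "(j,i) \<in> E" "b < n" for j i b
    proof -
      have ed: "i < n" "j < n" "i \<noteq> j" "0 < w i j" "w i j < 1" using edge[OF that(1)] by auto
      show ?thesis by (rule pos[OF that(1)]) (use A_facts(2)[of i n j w b] S_facts(3)[of i n j] that ed in auto)
    qed
    have std: "(i*n+i, j*n+j) \<in> ?R" if "(j,i) \<in> E" for j i
    proof -
      have ed: "i < n" "j < n" "i \<noteq> j" "0 < w i j" "w i j < 1" using edge[OF that(1)] by auto
      show ?thesis by (rule pos[OF that(1)]) (use A_facts(3)[of i n j w] S_facts(3)[of i n j] that ed in auto)
    qed
    have "(k div n * n + k mod n, k mod n * n + k mod n) \<in> ?R\<^sup>*"
      by (rule reach_move1[OF Esub st1]) (use sc kd n0 in auto)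
    moreover have "(k mod n * n + k mod n, 0) \<in> ?R\<^sup>*"
      by (rule reach_diag[OF std]) (use sc kd n0 in auto)
    ultimately have "(k div n * n + k mod n, 0) \<in> ?R\<^sup>*" by simp
    thus "(k, 0) \<in> ?R\<^sup>*" by simp
  qed
qed


lemma case4: "simple_one_rest_inside
           (msum (n*n) (\<lambda>(j,i). p i j \<cdot>\<^sub>m kron (Smat n j i) (Smat n j i)) E)"
  (is "simple_one_rest_inside ?M")
proof -
  let ?X = "\<lambda>j i. Smat n j i"
  have car: "?X j i \<in> carrier_mat n n \<and> ?X j i \<in> carrier_mat n n" if "(j,i) \<in> E" for j i
    by simp
  have nn: "?X j i $$ (a,c) \<ge> 0 \<and> ?X j i $$ (a,c) \<ge> 0" if "(j,i) \<in> E" "a < n" "c < n" for j i a c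
    using nnS[OF that] by simp
  have cp: "p i j > 0" if "(j,i) \<in> E" for j i using edge[OF that] by simp
  have Mc: "?M \<in> carrier_mat (n*n) (n*n)" by (simp add: msum_def)
  let ?P = "transpose_mat ?M"
  have Pc: "?P \<in> carrier_mat (n*n) (n*n)" using Mc by simp
  have Pent: "?P $$ (k,b) = ?M $$ (b,k)" if "k < n*n" "b < n*n" for k b
    using that Mc by simp
  have n0: "0 < n" using n1 by simp
  let ?R = "{(k,b). k < n*n \<and> b < n*n \<and> ?P $$ (k,b) > 0}"
  have pos: "(c*n+d, a*n+b) \<in> ?R" if "(j,i) \<in> E" "?X j i $$ (a,c) > 0" "?X j i $$ (b,d) > 0"
    "a < n" "b < n" "c < n" "d < n" for j i a b c d
  proof -
    have "?M $$ (a*n+b, c*n+d) > 0"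
      using msum_pos[where X="?X" and Y="?X" and cc="\<lambda>j i. p i j" and E=E and n=n, OF finE car nn cp that] .
    thus ?thesis using Pent enc_lt that by auto
  qed
  have "simple_one_rest_inside ?P"
  proof (rule abstract_simple[OF Pc, where h = "\<lambda>_. 1" and r = 0])
    show "?P $$ (k,b) \<ge> 0" if "k < n*n" "b < n*n" for k b
      unfolding Pent[OF that]
      by (rule msum_nonneg[where X="?X" and Y="?X" and cc="\<lambda>j i. p i j" and E=E and n=n, OF car nn]) (use cp that in \<open>auto intro: less_imp_le\<close>)
    show "\<And>k. k < n*n \<Longrightarrow> (0::real) < 1" by simp
    show "(\<Sum>b<n*n. ?P $$ (k,b) * 1) = 1" if k: "k < n*n" for k
    proof -
      have kd: "k div n < n" "k mod n < n" using k n0 by (auto simp: div_less_iff_less_mult mult.commute)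
      have "(\<Sum>b<n*n. ?P $$ (k,b) * 1) = (\<Sum>b<n*n. ?M $$ (b,k) * ((\<lambda>_. 1) (b div n) * (\<lambda>_. 1) (b mod n)))"
        by (rule sum.cong[OF refl]) (use Pent k in auto)
      also have "\<dots> = (\<Sum>e\<in>E. p (snd e) (fst e) * ((\<Sum>a<n. ?X (fst e) (snd e) $$ (a, k div n) * 1) * (\<Sum>b<n. ?X (fst e) (snd e) $$ (b, k mod n) * 1)))"
        by (rule Ph_genT[where X="?X" and Y="?X" and cc="\<lambda>j i. p i j" and E=E and n=n, OF car k])
      also have "\<dots> = (\<Sum>e\<in>E. p (snd e) (fst e))"
      proof (rule sum.cong[OF refl])
        fix e assume e: "e \<in> E"
        obtain j i where ji: "e = (j,i)" by force
        have ed: "i < n" "j < n" "i \<noteq> j" using edge e ji by auto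
        show "p (snd e) (fst e) * ((\<Sum>a<n. ?X (fst e) (snd e) $$ (a, k div n) * 1) * (\<Sum>b<n. ?X (fst e) (snd e) $$ (b, k mod n) * 1)) = p (snd e) (fst e)"
          using S_facts(4)[of i n j "k div n"] S_facts(4)[of i n j "k mod n"] ed kd ji by simp
      qed
      also have "\<dots> = 1" by (rule psum')
      finally show ?thesis .
    qed
    show "0 < n*n" using n0 by simp
    obtain i0 where i0: "(1, i0) \<in> E" using e0 by auto
    have ed0: "i0 < n" "1 < n" "i0 \<noteq> 1" using edge[OF i0] by auto
    have "(0*n+0, 0*n+0) \<in> ?R"
      by (rule pos[OF i0]) (use S_facts(2)[of i0 n 1 0] ed0 n0 in auto)
    thus "0 < ?P $$ (0,0)" by simp
    fix k assume k: "k < n*n"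
    have kd: "k div n < n" "k mod n < n" using k n0 by (auto simp: div_less_iff_less_mult mult.commute)
    have st: "(a*n+b, (if a = j then i else a)*n + (if b = j then i else b)) \<in> ?R"
      if "(j,i) \<in> E" "a < n" "b < n" for j i a b
    proof -
      have ed: "i < n" "j < n" "i \<noteq> j" using edge[OF that(1)] by auto
      have S1: "?X j i $$ (if x = j then i else x, x) > 0" if "x < n" for x
        using S_facts(2)[of i n j x] S_facts(3)[of i n j] ed that by auto
      show ?thesis by (rule pos[OF that(1) S1[OF that(2)] S1[OF that(3)]]) (use that ed in auto)
    qed
    obtain b' where b': "b' < n" "(k div n * n + k mod n, b') \<in> ?R\<^sup>*"
      using reach_merge1[OF Esub st, of "k div n"] sc kd n0 by blast
    moreover have "(b', 0) \<in> ?R\<^sup>*"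
      by (rule reach_merge2[OF Esub st]) (use sc b' n0 in auto)
    ultimately have "(k div n * n + k mod n, 0) \<in> ?R\<^sup>*" by (meson rtrancl_trans)
    thus "(k, 0) \<in> ?R\<^sup>*" by simp
  qed
  thus ?thesis by (rule simple_transpose[OF Mc])
qed

end


theorem lemma6:
  fixes n :: nat and E :: "(nat \<times> nat) set" and p w :: "nat \<Rightarrow> nat \<Rightarrow> real"
  assumes "n > 1"
    and "E \<subseteq> {0..<n} \<times> {0..<n}"
    and "\<forall>(j,i)\<in>E. j \<noteq> i"
    and "\<forall>(j,i)\<in>E. 0 < p i j \<and> p i j < 1"
    and "(\<Sum>(j,i)\<in>E. p i j) = 1"
    and "\<forall>(j,i)\<in>E. 0 < w i j \<and> w i j < 1"
    and "\<forall>u<n. \<forall>v<n. (u, v) \<in> E\<^sup>*"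
  shows "simple_one_rest_inside
           (msum (n*n) (\<lambda>(j,i). p i j \<cdot>\<^sub>m kron (1\<^sub>m n - Lmat n w j i) (1\<^sub>m n - Lmat n w j i)) E)
       \<and> simple_one_rest_inside
           (msum (n*n) (\<lambda>(j,i). p i j \<cdot>\<^sub>m kron (1\<^sub>m n - Lmat n w j i) (Smat n j i)) E)
       \<and> simple_one_rest_inside
           (msum (n*n) (\<lambda>(j,i). p i j \<cdot>\<^sub>m kron (Smat n j i) (1\<^sub>m n - Lmat n w j i)) E)
       \<and> simple_one_rest_inside
           (msum (n*n) (\<lambda>(j,i). p i j \<cdot>\<^sub>m kron (Smat n j i) (Smat n j i)) E)"
  using case1[OF assms] case2[OF assms] case3[OF assms] case4[OF assms] by blast

end
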